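(* Let $P$ be a natural unit interval order. Then $\mathbb{Q}(t)\otimes I^P_{\mathrm{plac}}\subseteq I^P_T$.
   Context: Write $a<_Pb$ for strict order in the poset $P$ and $a\sim_Pb$ for incomparable or equal. A natural unit interval order is a finite poset $P$ together with a total order $<$ on its underlying set such that (i) $a<_Pb$ implies $a<b$, and (ii) whenever $a\sim_Pb$, $b\sim_Pc$, $a<_Pc$ (with $a,b,c$ distinct), one has $a<b<c$. $\mathcal{U}_P=\mathbb{Z}\langle u_a:a\in P\rangle$. $I^P_{\mathrm{plac}}$ is the two-sided ideal of $\mathcal{U}_P$ generated by: $u_bu_au_c-u_bu_cu_a$ when $a<_Pb$, $c\not<_Pb$, $a<_Pc$; $u_cu_au_b-u_au_cu_b$ when $b\not<_Pa$, $b<_Pc$, $a<_Pc$; $u_cu_au_b-u_bu_cu_a$ when $a\sim_Pb$, $b\sim_Pc$, $a<_Pc$. $I^P_T$ is the two-sided ideal of $\mathbb{Q}(t)\otimes_{\mathbb{Z}}\mathcal{U}_P$ generated by $u_cu_a-u_au_c$ for $a<_Pc$, and $u_bu_a-t\,u_au_b$ for $a<b$ with $a\sim_Pb$. *)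

theory Defs
  imports "HOL-Computational_Algebra.Polynomial" "HOL-Computational_Algebra.Fraction_Field"
begin

text \<open>Noncommutative polynomials in variables indexed by 'a with coefficients in 'c,
  represented as coefficient functions on words (lists of letters).
  Genuine polynomials are those with finite support.\<close>

type_synonym ('a, 'c) ncpoly = "'a list \<Rightarrow> 'c"

definition ncfin :: "('a, 'c::zero) ncpoly \<Rightarrow> bool" where
  "ncfin p \<longleftrightarrow> finite {w. p w \<noteq> 0}"

definition ncmul :: "('a, 'c::semiring_0) ncpoly \<Rightarrow> ('a, 'c) ncpoly \<Rightarrow> ('a, 'c) ncpoly" where
  "ncmul p q = (\<lambda>w. \<Sum>i\<le>length w. p (take i w) * q (drop i w))"

definition ncadd :: "('a, 'c::plus) ncpoly \<Rightarrow> ('a, 'c) ncpoly \<Rightarrow> ('a, 'c) ncpoly" where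
  "ncadd p q = (\<lambda>w. p w + q w)"

definition ncsub :: "('a, 'c::minus) ncpoly \<Rightarrow> ('a, 'c) ncpoly \<Rightarrow> ('a, 'c) ncpoly" where
  "ncsub p q = (\<lambda>w. p w - q w)"

definition ncsmult :: "'c::times \<Rightarrow> ('a, 'c) ncpoly \<Rightarrow> ('a, 'c) ncpoly" where
  "ncsmult c p = (\<lambda>w. c * p w)"

definition ncvar :: "'a \<Rightarrow> ('a, 'c::{zero,one}) ncpoly" where
  "ncvar a = (\<lambda>w. if w = [a] then 1 else 0)"

definition ncmap :: "('c \<Rightarrow> 'd) \<Rightarrow> ('a, 'c) ncpoly \<Rightarrow> ('a, 'd) ncpoly" where
  "ncmap f p = (\<lambda>w. f (p w))"

inductive_set ncideal :: "('a, 'c::comm_ring_1) ncpoly set \<Rightarrow> ('a, 'c) ncpoly set"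
  for G where
  zero: "(\<lambda>w. 0) \<in> ncideal G"
| gen: "g \<in> G \<Longrightarrow> g \<in> ncideal G"
| add: "x \<in> ncideal G \<Longrightarrow> y \<in> ncideal G \<Longrightarrow> ncadd x y \<in> ncideal G"
| mult_left: "ncfin r \<Longrightarrow> x \<in> ncideal G \<Longrightarrow> ncmul r x \<in> ncideal G"
| mult_right: "ncfin r \<Longrightarrow> x \<in> ncideal G \<Longrightarrow> ncmul x r \<in> ncideal G"

text \<open>Natural unit interval order: a poset (strict order lessP) on the finite
  type 'a, together with the total order < of 'a.\<close>
definition incomp :: "('a \<Rightarrow> 'a \<Rightarrow> bool) \<Rightarrow> 'a \<Rightarrow> 'a \<Rightarrow> bool" where
  "incomp lessP a b \<longleftrightarrow> \<not> lessP a b \<and> \<not> lessP b a"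

definition natural_unit_interval_order :: "('a::{finite,linorder} \<Rightarrow> 'a \<Rightarrow> bool) \<Rightarrow> bool" where
  "natural_unit_interval_order lessP \<longleftrightarrow>
     (\<forall>a. \<not> lessP a a) \<and>
     (\<forall>a b c. lessP a b \<longrightarrow> lessP b c \<longrightarrow> lessP a c) \<and>
     (\<forall>a b. lessP a b \<longrightarrow> a < b) \<and>
     (\<forall>a b c. a \<noteq> b \<longrightarrow> b \<noteq> c \<longrightarrow> a \<noteq> c \<longrightarrow>
        incomp lessP a b \<longrightarrow> incomp lessP b c \<longrightarrow> lessP a c \<longrightarrow> a < b \<and> b < c)"

abbreviation mon3 :: "'a \<Rightarrow> 'a \<Rightarrow> 'a \<Rightarrow> ('a, 'c::comm_ring_1) ncpoly" where
  "mon3 x y z \<equiv> ncmul (ncmul (ncvar x) (ncvar y)) (ncvar z)"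

abbreviation mon2 :: "'a \<Rightarrow> 'a \<Rightarrow> ('a, 'c::comm_ring_1) ncpoly" where
  "mon2 x y \<equiv> ncmul (ncvar x) (ncvar y)"

definition plac_gens :: "('a \<Rightarrow> 'a \<Rightarrow> bool) \<Rightarrow> ('a, int) ncpoly set" where
  "plac_gens lessP =
     {ncsub (mon3 b a c) (mon3 b c a) | a b c. lessP a b \<and> \<not> lessP c b \<and> lessP a c}
   \<union> {ncsub (mon3 c a b) (mon3 a c b) | a b c. \<not> lessP b a \<and> lessP b c \<and> lessP a c}
   \<union> {ncsub (mon3 c a b) (mon3 b c a) | a b c.
        incomp lessP a b \<and> incomp lessP b c \<and> lessP a c}"

definition I_plac :: "('a \<Rightarrow> 'a \<Rightarrow> bool) \<Rightarrow> ('a, int) ncpoly set" where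
  "I_plac lessP = ncideal (plac_gens lessP)"

type_synonym qt = "rat poly fract"

definition tvar :: qt where
  "tvar = Fract [:0, 1:] 1"

definition T_gens :: "('a::linorder \<Rightarrow> 'a \<Rightarrow> bool) \<Rightarrow> ('a, qt) ncpoly set" where
  "T_gens lessP =
     {ncsub (mon2 c a) (mon2 a c) | a c. lessP a c}
   \<union> {ncsub (mon2 b a) (ncsmult tvar (mon2 a b)) | a b. a < b \<and> incomp lessP a b}"

definition I_T :: "('a::linorder \<Rightarrow> 'a \<Rightarrow> bool) \<Rightarrow> ('a, qt) ncpoly set" where
  "I_T lessP = ncideal (T_gens lessP)"

end

theory Submission imports Defs begin

definition mono :: "'a list \<Rightarrow> ('a,'c::{zero,one}) ncpoly" where
  "mono ws = (\<lambda>w. if w = ws then 1 else 0)"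

lemma take_eq_single: "i \<le> length w \<Longrightarrow> (take i w = [b]) \<longleftrightarrow> (i = 1 \<and> w \<noteq> [] \<and> hd w = b)"
  by (cases w; cases i) auto

lemma drop_eq_single: "i \<le> length w \<Longrightarrow> (drop i w = [b]) \<longleftrightarrow> (i = length w - 1 \<and> w \<noteq> [] \<and> last w = b)"
proof (induct w arbitrary: i)
  case Nil thus ?case by simp
next
  case (Cons x xs)
  show ?case
  proof (cases i)
    case 0 thus ?thesis by (cases xs) auto
  next
    case (Suc j) thus ?thesis using Cons by (cases xs) auto
  qed
qed

lemma ncmul_var_left: "ncmul (ncvar b) q = (\<lambda>w. if w \<noteq> [] \<and> hd w = b then q (tl w) else (0::'c::comm_ring_1))"
proof (rule ext)
  fix w :: "'a list"
  have "ncmul (ncvar b) q w = (\<Sum>i\<le>length w. if i = 1 then (if w \<noteq> [] \<and> hd w = b then q (tl w) else 0) else 0)"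
    unfolding ncmul_def ncvar_def
  proof (rule sum.cong[OF refl])
    fix i assume "i \<in> {..length w}"
    then have "i \<le> length w" by simp
    then show "(if take i w = [b] then 1 else 0) * q (drop i w) =
          (if i = 1 then (if w \<noteq> [] \<and> hd w = b then q (tl w) else 0) else 0)"
      by (simp add: take_eq_single drop_Suc)
  qed
  also have "\<dots> = (if w \<noteq> [] \<and> hd w = b then q (tl w) else 0)"
    by (cases w) (auto simp: Suc_le_eq)
  finally show "ncmul (ncvar b) q w = (if w \<noteq> [] \<and> hd w = b then q (tl w) else 0)" .
qed

lemma ncmul_var_right: "ncmul q (ncvar b) = (\<lambda>w. if w \<noteq> [] \<and> last w = b then q (butlast w) else (0::'c::comm_ring_1))"
proof (rule ext)
  fix w :: "'a list"
  have "ncmul q (ncvar b) w = (\<Sum>i\<le>length w. if i = length w - 1 then (if w \<noteq> [] \<and> last w = b then q (butlast w) else 0) else 0)"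
    unfolding ncmul_def ncvar_def
  proof (rule sum.cong[OF refl])
    fix i assume "i \<in> {..length w}"
    then have "i \<le> length w" by simp
    then show "q (take i w) * (if drop i w = [b] then 1 else 0) =
          (if i = length w - 1 then (if w \<noteq> [] \<and> last w = b then q (butlast w) else 0) else 0)"
      by (simp add: drop_eq_single butlast_conv_take)
  qed
  also have "\<dots> = (if w \<noteq> [] \<and> last w = b then q (butlast w) else 0)"
    by (cases w) simp_all
  finally show "ncmul q (ncvar b) w = (if w \<noteq> [] \<and> last w = b then q (butlast w) else 0)" .
qed

lemma mon2_eq: "(mon2 x y :: ('a,'c::comm_ring_1) ncpoly) = mono [x,y]"
  unfolding ncmul_var_left
proof (rule ext)
  fix w :: "'a list"
  show "(if w \<noteq> [] \<and> hd w = x then ncvar y (tl w) else 0) = (mono [x,y] w :: 'c)"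
    by (cases w) (auto simp: ncvar_def mono_def)
qed

lemma mon3_eq: "(mon3 x y z :: ('a,'c::comm_ring_1) ncpoly) = mono [x,y,z]"
proof (rule ext)
  fix w :: "'a list"
  show "(mon3 x y z :: ('a,'c::comm_ring_1) ncpoly) w = mono [x,y,z] w"
  proof (cases w rule: rev_cases)
    case Nil thus ?thesis by (simp only: mon2_eq) (simp add: mono_def ncmul_var_right)
  next
    case (snoc ys v) thus ?thesis by (simp only: mon2_eq) (auto simp: mono_def ncmul_var_right)
  qed
qed

lemma var_mono_left: "ncmul (ncvar b) (mono ws) = (mono (b#ws) :: ('a,'c::comm_ring_1) ncpoly)"
  unfolding ncmul_var_left by (rule ext) (auto simp: mono_def neq_Nil_conv)

lemma var_mono_right: "ncmul (mono ws) (ncvar b) = (mono (ws@[b]) :: ('a,'c::comm_ring_1) ncpoly)"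
proof (rule ext)
  fix w :: "'a list"
  show "ncmul (mono ws) (ncvar b) w = (mono (ws@[b]) :: ('a,'c::comm_ring_1) ncpoly) w"
    by (cases w rule: rev_cases) (auto simp: mono_def ncmul_var_right)
qed

lemma var_left_sub: "ncmul (ncvar b) (ncsub p q) = ncsub (ncmul (ncvar b) p) (ncmul (ncvar b) (q::('a,'c::comm_ring_1) ncpoly))"
  unfolding ncmul_var_left ncsub_def by (rule ext) auto

lemma var_right_sub: "ncmul (ncsub p q) (ncvar b) = ncsub (ncmul p (ncvar b)) (ncmul (q::('a,'c::comm_ring_1) ncpoly) (ncvar b))"
  unfolding ncmul_var_right ncsub_def by (rule ext) auto

lemma var_left_smult: "ncmul (ncvar b) (ncsmult c p) = ncsmult c (ncmul (ncvar b) (p::('a,'c::comm_ring_1) ncpoly))"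
  unfolding ncmul_var_left ncsmult_def by (rule ext) auto

lemma var_right_smult: "ncmul (ncsmult c p) (ncvar b) = ncsmult c (ncmul (p::('a,'c::comm_ring_1) ncpoly) (ncvar b))"
  unfolding ncmul_var_right ncsmult_def by (rule ext) auto

definition ncconst :: "'c \<Rightarrow> ('a,'c::zero) ncpoly" where
  "ncconst c = (\<lambda>w. if w = [] then c else 0)"

lemma ncfin_const: "ncfin (ncconst c)"
proof -
  have "{w. ncconst c w \<noteq> 0} \<subseteq> {[]}" by (auto simp: ncconst_def split: if_splits)
  then show ?thesis unfolding ncfin_def using finite_subset by blast
qed

lemma ncfin_var: "ncfin (ncvar a)"
proof -
  have "{w. ncvar a w \<noteq> (0::'c::{zero,one})} \<subseteq> {[a]}" by (auto simp: ncvar_def split: if_splits)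
  then show ?thesis unfolding ncfin_def using finite_subset by blast
qed

lemma ncmul_const: "ncmul (ncconst c) x = ncsmult c (x::('a,'c::comm_ring_1) ncpoly)"
proof (rule ext)
  fix w :: "'a list"
  have "ncmul (ncconst c) x w = (\<Sum>i\<le>length w. if i = 0 then c * x w else 0)"
    unfolding ncmul_def ncconst_def
    by (rule sum.cong[OF refl]) auto
  also have "\<dots> = c * x w" by simp
  finally show "ncmul (ncconst c) x w = ncsmult c x w" by (simp add: ncsmult_def)
qed

lemma ideal_smult: "x \<in> ncideal G \<Longrightarrow> ncsmult c x \<in> ncideal G"
  using ncideal.mult_left[OF ncfin_const, of x G c] by (simp add: ncmul_const)

lemma ideal_sub: "x \<in> ncideal G \<Longrightarrow> y \<in> ncideal G \<Longrightarrow> ncsub x y \<in> ncideal G"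
proof -
  assume x: "x \<in> ncideal G" and y: "y \<in> ncideal G"
  have "ncsub x y = ncadd x (ncsmult (-1) y)" by (rule ext) (simp add: ncsub_def ncadd_def ncsmult_def)
  then show ?thesis using ncideal.add[OF x ideal_smult[OF y]] by simp
qed

lemma ideal_varl: "x \<in> ncideal G \<Longrightarrow> ncmul (ncvar a) x \<in> ncideal G"
  by (rule ncideal.mult_left[OF ncfin_var])

lemma ideal_varr: "x \<in> ncideal G \<Longrightarrow> ncmul x (ncvar a) \<in> ncideal G"
  by (rule ncideal.mult_right[OF ncfin_var])

lemma ncmap_mul: "ncmap (of_int :: int \<Rightarrow> 'c::comm_ring_1) (ncmul p q) = ncmul (ncmap of_int p) (ncmap of_int q)"
  unfolding ncmap_def ncmul_def by (rule ext) (simp add: of_int_sum)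

lemma ncmap_add: "ncmap (of_int :: int \<Rightarrow> 'c::comm_ring_1) (ncadd p q) = ncadd (ncmap of_int p) (ncmap of_int q)"
  unfolding ncmap_def ncadd_def by (rule ext) simp

lemma ncmap_sub: "ncmap (of_int :: int \<Rightarrow> 'c::comm_ring_1) (ncsub p q) = ncsub (ncmap of_int p) (ncmap of_int q)"
  unfolding ncmap_def ncsub_def by (rule ext) simp

lemma ncmap_mono: "ncmap (of_int :: int \<Rightarrow> 'c::comm_ring_1) (mono ws) = mono ws"
  unfolding ncmap_def mono_def by (rule ext) simp

lemma ncfin_map: "ncfin r \<Longrightarrow> ncfin (ncmap (of_int :: int \<Rightarrow> 'c::comm_ring_1) r)"
proof -
  assume "ncfin r"
  moreover have "{w. ncmap (of_int :: int \<Rightarrow> 'c) r w \<noteq> 0} \<subseteq> {w. r w \<noteq> 0}"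
    by (auto simp: ncmap_def)
  ultimately show ?thesis unfolding ncfin_def using finite_subset by blast
qed

lemma ncmap_ideal:
  assumes "x \<in> ncideal G" and "\<And>g. g \<in> G \<Longrightarrow> ncmap (of_int :: int \<Rightarrow> 'c::comm_ring_1) g \<in> ncideal H"
  shows "ncmap (of_int :: int \<Rightarrow> 'c) x \<in> ncideal H"
  using assms(1)
proof induct
  case zero
  show ?case by (simp add: ncmap_def ncideal.zero)
next
  case (gen g) thus ?case by (rule assms(2))
next
  case (add x y) thus ?case by (simp add: ncmap_add ncideal.add)
next
  case (mult_left r x) thus ?case by (simp add: ncmap_mul ncideal.mult_left ncfin_map)
next
  case (mult_right r x) thus ?case by (simp add: ncmap_mul ncideal.mult_right ncfin_map)
qed

theorem mainTheorem5:
  fixes lessP :: "'a::{finite,linorder} \<Rightarrow> 'a \<Rightarrow> bool"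
  assumes "natural_unit_interval_order lessP"
  shows "ncmap (of_int :: int \<Rightarrow> qt) ` I_plac lessP \<subseteq> I_T lessP"
proof -
  note N = assms[unfolded natural_unit_interval_order_def]
  have irr: "\<And>a. \<not> lessP a a" using N by blast
  have nuio: "\<And>a b c. a \<noteq> b \<Longrightarrow> b \<noteq> c \<Longrightarrow> a \<noteq> c \<Longrightarrow> incomp lessP a b \<Longrightarrow> incomp lessP b c \<Longrightarrow> lessP a c \<Longrightarrow> a < b \<and> b < c"
    using N by blast
  define J where "J = I_T lessP"
  have gA: "ncsub (mono[c,a]) (mono[a,c]) \<in> J" if "lessP a c" for a c
  proof -
    have "ncsub (mon2 c a) (mon2 a c) \<in> T_gens lessP" unfolding T_gens_def using that by blast
    then show ?thesis unfolding J_def I_T_def mon2_eq by (rule ncideal.gen)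
  qed
  have gB: "ncsub (mono[b,a]) (ncsmult tvar (mono[a,b])) \<in> J" if "a < b" "incomp lessP a b" for a b
  proof -
    have "ncsub (mon2 b a) (ncsmult tvar (mon2 a b)) \<in> T_gens lessP" unfolding T_gens_def using that by blast
    then show ?thesis unfolding J_def I_T_def mon2_eq by (rule ncideal.gen)
  qed
  have JI: "J = ncideal (T_gens lessP)" by (simp add: J_def I_T_def)
  note simps = var_left_smult var_left_sub var_mono_left var_right_smult var_right_sub var_mono_right
  have gens: "ncmap (of_int :: int \<Rightarrow> qt) g \<in> J" if "g \<in> plac_gens lessP" for g
  proof -
    from that consider
      (1) a b c where "g = ncsub (mon3 b a c) (mon3 b c a)" "lessP a b" "\<not> lessP c b" "lessP a c"
    | (2) a b c where "g = ncsub (mon3 c a b) (mon3 a c b)" "\<not> lessP b a" "lessP b c" "lessP a c"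
    | (3) a b c where "g = ncsub (mon3 c a b) (mon3 b c a)" "incomp lessP a b" "incomp lessP b c" "lessP a c"
      unfolding plac_gens_def by blast
    then show ?thesis
    proof cases
      case 1
      have "ncmul (ncvar b) (ncsmult (-1) (ncsub (mono[c,a]) (mono[a,c]))) \<in> J"
        unfolding JI by (intro ideal_varl ideal_smult) (use gA[OF 1(4)] JI in simp)
      moreover have "ncmul (ncvar b) (ncsmult (-1) (ncsub (mono[c,a]) (mono[a,c]))) = ncmap (of_int :: int \<Rightarrow> qt) g"
        apply (simp only: 1(1) mon3_eq ncmap_sub ncmap_mono simps)
        apply (rule ext) apply (simp add: ncsub_def ncsmult_def) done
      ultimately show ?thesis by simp
    next
      case 2
      have "ncmul (ncsub (mono[c,a]) (mono[a,c])) (ncvar b) \<in> J"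
        unfolding JI by (intro ideal_varr) (use gA[OF 2(4)] JI in simp)
      moreover have "ncmul (ncsub (mono[c,a]) (mono[a,c])) (ncvar b) = ncmap (of_int :: int \<Rightarrow> qt) g"
        by (simp only: 2(1) mon3_eq ncmap_sub ncmap_mono simps append.simps)
      ultimately show ?thesis by simp
    next
      case 3
      have ac: "a \<noteq> c" using 3(4) irr by auto
      show ?thesis
      proof (cases "a = b")
        case True
        have "ncmul (ncsub (mono[c,a]) (mono[a,c])) (ncvar b) \<in> J"
          unfolding JI by (intro ideal_varr) (use gA[OF 3(4)] JI in simp)
        moreover have "ncmul (ncsub (mono[c,a]) (mono[a,c])) (ncvar b) = ncmap (of_int :: int \<Rightarrow> qt) g"
          using True by (simp only: 3(1) mon3_eq ncmap_sub ncmap_mono simps append.simps)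
        ultimately show ?thesis by simp
      next
        case False
        show ?thesis
        proof (cases "b = c")
          case True
          have "ncmul (ncvar b) (ncsmult (-1) (ncsub (mono[c,a]) (mono[a,c]))) \<in> J"
            unfolding JI by (intro ideal_varl ideal_smult) (use gA[OF 3(4)] JI in simp)
          moreover have "ncmul (ncvar b) (ncsmult (-1) (ncsub (mono[c,a]) (mono[a,c]))) = ncmap (of_int :: int \<Rightarrow> qt) g"
            using True apply (simp only: 3(1) mon3_eq ncmap_sub ncmap_mono simps)
            apply (rule ext) apply (simp add: ncsub_def ncsmult_def) done
          ultimately show ?thesis by simp
        next
          case bc: False
          have lt: "a < b \<and> b < c" using nuio[OF False bc ac 3(2,3,4)] .
          have icbc: "incomp lessP b c" using 3(3) .
          define X1 :: "('a, qt) ncpoly" where "X1 = ncmul (ncsub (mono[c,a]) (mono[a,c])) (ncvar b)"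
          define X2 :: "('a, qt) ncpoly" where "X2 = ncmul (ncvar a) (ncsub (mono[c,b]) (ncsmult tvar (mono[b,c])))"
          define X3 :: "('a, qt) ncpoly" where "X3 = ncmul (ncvar b) (ncsub (mono[c,a]) (mono[a,c]))"
          define X4 :: "('a, qt) ncpoly" where "X4 = ncmul (ncsub (mono[b,a]) (ncsmult tvar (mono[a,b]))) (ncvar c)"
          have "X1 \<in> J" unfolding X1_def JI by (intro ideal_varr) (use gA[OF 3(4)] JI in simp)
          moreover have "X2 \<in> J" unfolding X2_def JI by (intro ideal_varl) (use gB[of b c] lt icbc JI in simp)
          moreover have "X3 \<in> J" unfolding X3_def JI by (intro ideal_varl) (use gA[OF 3(4)] JI in simp)
          moreover have "X4 \<in> J" unfolding X4_def JI by (intro ideal_varr) (use gB[of a b] lt 3(2) JI in simp)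
          ultimately have "ncsub (ncadd X1 X2) (ncadd X3 X4) \<in> J"
            unfolding JI by (intro ideal_sub ncideal.add)
          moreover have "ncsub (ncadd X1 X2) (ncadd X3 X4) = ncmap (of_int :: int \<Rightarrow> qt) g"
            using False bc ac
            apply (simp only: 3(1) mon3_eq ncmap_sub ncmap_mono X1_def X2_def X3_def X4_def simps append.simps)
            apply (rule ext) apply (auto simp: ncsub_def ncsmult_def ncadd_def mono_def) done
          ultimately show ?thesis by simp
        qed
      qed
    qed
  qed
  show ?thesis
  proof
    fix y assume "y \<in> ncmap (of_int :: int \<Rightarrow> qt) ` I_plac lessP"
    then obtain x where x: "x \<in> I_plac lessP" and y: "y = ncmap of_int x" by blast
    show "y \<in> I_T lessP"
      unfolding y J_def[symmetric] JI
      by (rule ncmap_ideal[OF x[unfolded I_plac_def]]) (use gens JI in simp)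
  qed
qed
end
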